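(* Let $q=p^a$ with $p$ prime, $\mathcal V=\mathbb F_q$, and let $G=N.L\le{\rm A\Gamma L}(1,q)$, where $N=\{t_y:y\in\mathbb F_q\}$, $t_y:u\mapsto u+y$, is the group of translations and $L\le{\rm \Gamma L}(1,q)$ is transitive on $\mathcal V\setminus\{0\}$. Let $\gamma\subset\mathcal V$ with $|\gamma|=k$, $1\le k\le q-1$, such that $G_\gamma$ is transitive on $\gamma\times(\mathcal V\setminus\gamma)$. Let $A$ be the group of maps $u\mapsto uz$ ($z\in\mathbb F_q^\times$), let $M=G_\gamma\cap N=\{t_y:y\in Y\}$, and let $K=\mathbb F_p[G_\gamma\cap A]$ be the subfield of $\mathbb F_q$ generated by the scalars $z$ with $(u\mapsto uz)\in G_\gamma$. If $M\ne1$, then $M$ is a $K$-vector space (that is, $Y$ is closed under addition and under multiplication by elements of $K$) and $K$ is a proper subfield of $\mathbb F_q$. *)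

theory Defs
  imports Main "HOL-Computational_Algebra.Primes"
begin

definition field_aut :: "('a::field \<Rightarrow> 'a) \<Rightarrow> bool" where
  "field_aut \<sigma> \<longleftrightarrow> bij \<sigma> \<and> (\<forall>x y. \<sigma> (x + y) = \<sigma> x + \<sigma> y) \<and> (\<forall>x y. \<sigma> (x * y) = \<sigma> x * \<sigma> y)"

definition GammaL1 :: "('a::field \<Rightarrow> 'a) set" where
  "GammaL1 = {f. \<exists>z \<sigma>. z \<noteq> 0 \<and> field_aut \<sigma> \<and> f = (\<lambda>u. z * \<sigma> u)}"

definition transl :: "'a::field \<Rightarrow> 'a \<Rightarrow> 'a" where
  "transl y = (\<lambda>u. u + y)"

definition scal :: "'a::field \<Rightarrow> 'a \<Rightarrow> 'a" where
  "scal z = (\<lambda>u. u * z)"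

definition perm_group :: "('a \<Rightarrow> 'a) set \<Rightarrow> bool" where
  "perm_group S \<longleftrightarrow> id \<in> S \<and> (\<forall>f\<in>S. \<forall>g\<in>S. f \<circ> g \<in> S) \<and> (\<forall>f\<in>S. bij f \<and> inv f \<in> S)"

definition NL :: "('a::field \<Rightarrow> 'a) set \<Rightarrow> ('a \<Rightarrow> 'a) set" where
  "NL L = {transl y \<circ> l | y l. l \<in> L}"

definition setstab :: "('a \<Rightarrow> 'a) set \<Rightarrow> 'a set \<Rightarrow> ('a \<Rightarrow> 'a) set" where
  "setstab G \<gamma> = {g \<in> G. g ` \<gamma> = \<gamma>}"

definition transitive_on :: "('a \<Rightarrow> 'a) set \<Rightarrow> 'a set \<Rightarrow> bool" where
  "transitive_on H X \<longleftrightarrow> (\<forall>u\<in>X. \<forall>v\<in>X. \<exists>h\<in>H. h u = v)"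

definition transitive_on_pairs :: "('a \<Rightarrow> 'a) set \<Rightarrow> 'a set \<Rightarrow> 'a set \<Rightarrow> bool" where
  "transitive_on_pairs H X Y \<longleftrightarrow>
     (\<forall>u\<in>X. \<forall>v\<in>Y. \<forall>u'\<in>X. \<forall>v'\<in>Y. \<exists>h\<in>H. h u = u' \<and> h v = v')"

definition is_subfield :: "'a::field set \<Rightarrow> bool" where
  "is_subfield S \<longleftrightarrow> 0 \<in> S \<and> 1 \<in> S \<and> (\<forall>x\<in>S. \<forall>y\<in>S. x + y \<in> S \<and> x * y \<in> S)
      \<and> (\<forall>x\<in>S. - x \<in> S) \<and> (\<forall>x\<in>S. x \<noteq> 0 \<longrightarrow> inverse x \<in> S)"

definition gen_subfield :: "'a::field set \<Rightarrow> 'a set" where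
  "gen_subfield Z = \<Inter> {S. is_subfield S \<and> Z \<subseteq> S}"

end

theory Submission
  imports Defs
begin

lemma Y_char:
  assumes "perm_group L"
  shows "transl y \<in> setstab (NL L) \<gamma> \<longleftrightarrow> (\<lambda>u. u + y) ` \<gamma> = (\<gamma>::'a::field set)"
proof -
  have "id \<in> L" using assms by (simp add: perm_group_def)
  hence "transl y \<in> NL L" unfolding NL_def by (metis (mono_tags, lifting) comp_id mem_Collect_eq)
  thus ?thesis by (simp add: setstab_def transl_def)
qed

lemma per_add:
  assumes "(\<lambda>u. u + y) ` \<gamma> = (\<gamma>::'a::field set)" "(\<lambda>u. u + y') ` \<gamma> = \<gamma>"
  shows "(\<lambda>u. u + (y + y')) ` \<gamma> = \<gamma>"
proof -
  have "(\<lambda>u. u + (y + y')) ` \<gamma> = (\<lambda>u. u + y') ` ((\<lambda>u. u + y) ` \<gamma>)"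
    by (simp add: image_image add.assoc)
  thus ?thesis using assms by simp
qed

lemma per_neg:
  assumes "(\<lambda>u. u + y) ` \<gamma> = (\<gamma>::'a::field set)"
  shows "(\<lambda>u. u + (- y)) ` \<gamma> = \<gamma>"
proof -
  have "(\<lambda>u. u + (- y)) ` ((\<lambda>u. u + y) ` \<gamma>) = \<gamma>"
    by (simp add: image_image)
  thus ?thesis using assms by simp
qed

lemma per_scal:
  assumes "(\<lambda>u. u + y) ` \<gamma> = (\<gamma>::'a::field set)" "(\<lambda>u. u * z) ` \<gamma> = \<gamma>"
  shows "(\<lambda>u. u + z * y) ` \<gamma> = \<gamma>"
proof -
  have "(\<lambda>u. u + z * y) ` \<gamma> = (\<lambda>u. u + z * y) ` ((\<lambda>u. u * z) ` \<gamma>)" using assms by simp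
  also have "\<dots> = (\<lambda>u. u * z) ` ((\<lambda>u. u + y) ` \<gamma>)"
    by (simp add: image_image algebra_simps)
  finally show ?thesis using assms by simp
qed

theorem lemma6p3:
  fixes p e :: nat and L :: "('a::{field,finite} \<Rightarrow> 'a) set"
    and \<gamma> :: "'a set" and k :: nat
  assumes "prime p" and "card (UNIV :: 'a set) = p ^ e"
    and "perm_group L" and "L \<subseteq> GammaL1"
    and "transitive_on L (UNIV - {0})"
    and "card \<gamma> = k" and "1 \<le> k" and "k \<le> card (UNIV :: 'a set) - 1"
    and "transitive_on_pairs (setstab (NL L) \<gamma>) \<gamma> (UNIV - \<gamma>)"
    and "{y. transl y \<in> setstab (NL L) \<gamma>} \<noteq> {0}"
  shows "(\<forall>y\<in>{y. transl y \<in> setstab (NL L) \<gamma>}. \<forall>y'\<in>{y. transl y \<in> setstab (NL L) \<gamma>}.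
            y + y' \<in> {y. transl y \<in> setstab (NL L) \<gamma>})
       \<and> (\<forall>c\<in>gen_subfield {z. z \<noteq> 0 \<and> scal z \<in> setstab (NL L) \<gamma>}.
            \<forall>y\<in>{y. transl y \<in> setstab (NL L) \<gamma>}. c * y \<in> {y. transl y \<in> setstab (NL L) \<gamma>})
       \<and> gen_subfield {z. z \<noteq> 0 \<and> scal z \<in> setstab (NL L) \<gamma>} \<noteq> UNIV"
proof -
  define Y where "Y = {y. transl y \<in> setstab (NL L) \<gamma>}"
  define Z where "Z = {z. z \<noteq> 0 \<and> scal z \<in> setstab (NL L) \<gamma>}"
  have Yc: "y \<in> Y \<longleftrightarrow> (\<lambda>u. u + y) ` \<gamma> = \<gamma>" for y
    using Y_char[OF assms(3)] by (simp add: Y_def)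
  have Yadd: "y + y' \<in> Y" if "y \<in> Y" "y' \<in> Y" for y y'
    using that per_add[of y \<gamma> y'] unfolding Yc by simp
  have Yneg: "- y \<in> Y" if "y \<in> Y" for y
    using that per_neg[of y \<gamma>] unfolding Yc by simp
  have Y0: "0 \<in> Y" using Yc by simp
  define S where "S = {c. \<forall>y\<in>Y. c * y \<in> Y}"
  have ZS: "Z \<subseteq> S"
  proof
    fix z assume "z \<in> Z"
    hence "(\<lambda>u. u * z) ` \<gamma> = \<gamma>" by (simp add: Z_def setstab_def scal_def)
    thus "z \<in> S" unfolding S_def using per_scal[of _ \<gamma> z] Yc by auto
  qed
  have subS: "is_subfield S"
    unfolding is_subfield_def
  proof (intro conjI ballI impI)
    show "0 \<in> S" using Y0 by (simp add: S_def)
    show "1 \<in> S" by (simp add: S_def)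
    fix x assume x: "x \<in> S"
    { fix y assume "y \<in> S"
      thus "x + y \<in> S" using x Yadd by (simp add: S_def distrib_right)
      show "x * y \<in> S" using x \<open>y \<in> S\<close> by (simp add: S_def mult.assoc) }
    show "- x \<in> S" using x Yneg by (simp add: S_def)
    assume "x \<noteq> 0"
    have "(\<lambda>y. x * y) ` Y = Y"
      by (rule endo_inj_surj) (use x \<open>x \<noteq> 0\<close> in \<open>auto simp: S_def inj_on_def\<close>)
    show "inverse x \<in> S" unfolding S_def mem_Collect_eq
    proof (intro ballI)
      fix y assume "y \<in> Y"
      then obtain y' where "y' \<in> Y" "y = x * y'" using \<open>(\<lambda>y. x * y) ` Y = Y\<close> by force
      thus "inverse x * y \<in> Y" using \<open>x \<noteq> 0\<close> by (simp add: mult.assoc[symmetric])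
    qed
  qed
  have genS: "gen_subfield Z \<subseteq> S"
    unfolding gen_subfield_def using subS ZS by blast
  have part3: "gen_subfield Z \<noteq> UNIV"
  proof
    assume "gen_subfield Z = UNIV"
    hence SU: "S = UNIV" using genS by auto
    obtain y0 where y0: "y0 \<in> Y" "y0 \<noteq> 0" using assms(10) Y0 unfolding Y_def by blast
    have "y \<in> Y" for y
    proof -
      have "y / y0 \<in> S" using SU by simp
      hence "(y / y0) * y0 \<in> Y" using y0 unfolding S_def by blast
      thus ?thesis using y0 by simp
    qed
    have "\<gamma> \<noteq> {}" using assms(6,7) by auto
    then obtain g where g: "g \<in> \<gamma>" by blast
    have "\<gamma> = UNIV"
    proof
      show "UNIV \<subseteq> \<gamma>"
      proof
        fix v
        have "(\<lambda>u. u + (v - g)) ` \<gamma> = \<gamma>" using \<open>\<And>y. y \<in> Y\<close>[of "v - g"] unfolding Yc .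
        moreover have "v \<in> (\<lambda>u. u + (v - g)) ` \<gamma>" using g by force
        ultimately show "v \<in> \<gamma>" by simp
      qed
    qed simp
    moreover have "card (UNIV::'a set) > 0" by (simp add: card_gt_0_iff)
    ultimately show False using assms(6,7,8) by simp
  qed
  show ?thesis
    unfolding Y_def[symmetric] Z_def[symmetric]
  proof (intro conjI)
    show "\<forall>y\<in>Y. \<forall>y'\<in>Y. y + y' \<in> Y" using Yadd by blast
    show "\<forall>c\<in>gen_subfield Z. \<forall>y\<in>Y. c * y \<in> Y" using genS unfolding S_def by blast
  qed (rule part3)
qed

end
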